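(* Let $m$ be an odd prime, $\gamma_1,\gamma_2\in\mathbb Z$ and $n\in\mathbb Z^+$. Let $\underline a=(a_0,a_1,\dots)$ be an almost $m$-ary nearly perfect sequence of type $(\gamma_1,\gamma_2)$ and period $n+2$ with exactly two zero-symbols in each period, and suppose these are consecutive, i.e. $a_j=a_{j+1}=0$ for some $j$ (indices modulo $n+2$). Then $\underline a$ is symmetric: $a_x=a_{2j+1-x}$ for all $x$ (indices modulo $n+2$).
   Context: Let $\zeta_m\in\mathbb C$ be a primitive $m$-th root of unity. A sequence $\underline a=(a_0,a_1,\dots)$ of period $N$ is an almost $m$-ary sequence with $s$ zero-symbols if in each period exactly $s$ entries are $0$ and every other entry is of the form $\zeta_m^{b}$ for some integer $b$. Its autocorrelation function is $C_{\underline a}(t)=\sum_{i=0}^{N-1}a_i\overline{a_{i+t}}$ (indices modulo $N$, bar = complex conjugation). $\underline a$ is a nearly perfect sequence (NPS) of type $(\gamma_1,\gamma_2)$ if every out-of-phase autocorrelation coefficient $C_{\underline a}(t)$, $1\le t\le N-1$, equals $\gamma_1$ or $\gamma_2$. *)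

theory Defs
  imports Complex_Main "HOL-Computational_Algebra.Primes"
begin

definition root_of_unity :: "nat \<Rightarrow> complex" where
  "root_of_unity m = cis (2 * pi / real m)"

definition periodic_seq :: "int \<Rightarrow> (int \<Rightarrow> complex) \<Rightarrow> bool" where
  "periodic_seq N a \<longleftrightarrow> (\<forall>i. a (i + N) = a i)"

definition almost_mary :: "nat \<Rightarrow> int \<Rightarrow> nat \<Rightarrow> (int \<Rightarrow> complex) \<Rightarrow> bool" where
  "almost_mary m N s a \<longleftrightarrow> periodic_seq N a \<and>
     card {i \<in> {0..<N}. a i = 0} = s \<and>
     (\<forall>i \<in> {0..<N}. a i \<noteq> 0 \<longrightarrow> (\<exists>b::int. a i = root_of_unity m powi b))"

definition autocorr :: "int \<Rightarrow> (int \<Rightarrow> complex) \<Rightarrow> int \<Rightarrow> complex" where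
  "autocorr N a t = (\<Sum>i\<in>{0..<N}. a i * cnj (a (i + t)))"

definition nearly_perfect :: "int \<Rightarrow> (int \<Rightarrow> complex) \<Rightarrow> complex \<Rightarrow> complex \<Rightarrow> bool" where
  "nearly_perfect N a g1 g2 \<longleftrightarrow>
     (\<forall>t \<in> {1..N-1}. autocorr N a t = g1 \<or> autocorr N a t = g2)"

end

theory Submission
  imports Defs "HOL-Computational_Algebra.Polynomial_Factorial"
begin


lemma eis_aux:
  fixes G H :: "int poly" and p :: int
  assumes p: "prime p" and dG: "degree G \<ge> 1" and dH: "degree H \<ge> 1"
    and all: "\<forall>k < degree (G*H). p dvd coeff (G*H) k"
    and G0: "p dvd coeff G 0" and H0: "\<not> p dvd coeff H 0"
    and lG: "\<not> p dvd lead_coeff G"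
  shows False
proof -
  define k where "k = (LEAST i. \<not> p dvd coeff G i)"
  have k1: "\<not> p dvd coeff G k" unfolding k_def by (rule LeastI[of _ "degree G"]) (use lG in auto)
  have k2: "\<And>i. i < k \<Longrightarrow> p dvd coeff G i" unfolding k_def using not_less_Least by blast
  have kle: "k \<le> degree G" unfolding k_def by (rule Least_le) (use lG in auto)
  have k0: "k > 0" using G0 k1 by (cases k) auto
  have "G \<noteq> 0" "H \<noteq> 0" using dG dH by auto
  then have dGH: "degree (G*H) = degree G + degree H" by (simp add: degree_mult_eq)
  have "k < degree (G*H)" using kle dH dGH by simp
  with all have pd: "p dvd coeff (G*H) k" by auto
  have "coeff (G*H) k = (\<Sum>i\<le>k. coeff G i * coeff H (k-i))" by (rule coeff_mult)
  also have "\<dots> = (\<Sum>i<k. coeff G i * coeff H (k-i)) + coeff G k * coeff H 0"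
    by (simp add: lessThan_Suc_atMost[symmetric])
  finally have eq: "coeff (G*H) k = (\<Sum>i<k. coeff G i * coeff H (k-i)) + coeff G k * coeff H 0" .
  have "p dvd (\<Sum>i<k. coeff G i * coeff H (k-i))"
    by (rule dvd_sum) (use k2 in auto)
  with pd eq have "p dvd coeff G k * coeff H 0" by (metis dvd_add_right_iff)
  then have "p dvd coeff G k \<or> p dvd coeff H 0" using p prime_dvd_mult_iff by blast
  then show False using k1 H0 by blast
qed

lemma eisenstein:
  fixes G H :: "int poly" and p :: int
  assumes p: "prime p" and dG: "degree G \<ge> 1" and dH: "degree H \<ge> 1"
    and all: "\<forall>k < degree (G*H). p dvd coeff (G*H) k"
    and c0: "\<not> p^2 dvd coeff (G*H) 0"
    and l: "\<not> p dvd lead_coeff (G*H)"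
  shows False
proof -
  have lGH: "lead_coeff (G*H) = lead_coeff G * lead_coeff H" by (rule lead_coeff_mult)
  have lG: "\<not> p dvd lead_coeff G" using l lGH by auto
  have lH: "\<not> p dvd lead_coeff H" using l lGH by auto
  have c: "coeff (G*H) 0 = coeff G 0 * coeff H 0" by (simp add: coeff_mult)
  have "G \<noteq> 0" "H \<noteq> 0" using dG dH by auto
  then have "degree (G*H) = degree G + degree H" by (simp add: degree_mult_eq)
  then have "0 < degree (G*H)" using dG by simp
  then have "p dvd coeff (G*H) 0" using all by blast
  hence "p dvd coeff G 0 \<or> p dvd coeff H 0" using c p prime_dvd_mult_iff by metis
  moreover have "\<not> (p dvd coeff G 0 \<and> p dvd coeff H 0)"
  proof
    assume "p dvd coeff G 0 \<and> p dvd coeff H 0"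
    then have "p * p dvd coeff G 0 * coeff H 0" by (simp add: mult_dvd_mono)
    then show False using c0 c by (simp add: power2_eq_square)
  qed
  ultimately have "(p dvd coeff G 0 \<and> \<not> p dvd coeff H 0) \<or> (p dvd coeff H 0 \<and> \<not> p dvd coeff G 0)" by blast
  then show False
  proof (elim disjE conjE)
    assume a: "p dvd coeff G 0" and b: "\<not> p dvd coeff H 0"
    show False using eis_aux[OF p dG dH all a b lG] .
  next
    assume a: "p dvd coeff H 0" and b: "\<not> p dvd coeff G 0"
    have all': "\<forall>k < degree (H*G). p dvd coeff (H*G) k" using all by (simp add: mult.commute)
    show False using eis_aux[OF p dH dG all' a b lH] .
  qed
qed


lemma mp_add: "map_poly (of_int :: int \<Rightarrow> 'a::comm_ring_1) (p + q) = map_poly of_int p + map_poly of_int q"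
  by (rule poly_eqI) (simp add: coeff_map_poly)
lemma mp_diff: "map_poly (of_int :: int \<Rightarrow> 'a::comm_ring_1) (p - q) = map_poly of_int p - map_poly of_int q"
  by (rule poly_eqI) (simp add: coeff_map_poly)
lemma mp_mult: "map_poly (of_int :: int \<Rightarrow> 'a::comm_ring_1) (p * q) = map_poly of_int p * map_poly of_int q"
  by (rule poly_eqI) (simp add: coeff_map_poly coeff_mult)
lemma mp_smult: "map_poly (of_int :: int \<Rightarrow> 'a::comm_ring_1) (smult c q) = smult (of_int c) (map_poly of_int q)"
  by (rule poly_eqI) (simp add: coeff_map_poly)

definition cyc :: "nat \<Rightarrow> int poly" where "cyc p = (\<Sum>k<p. monom 1 k)"

lemma cyc_mult: "cyc p * [:-1,1:] = monom 1 p - 1"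
proof (induction p)
  case 0 then show ?case by (simp add: cyc_def)
next
  case (Suc p)
  have "cyc (Suc p) = cyc p + monom 1 p" by (simp add: cyc_def)
  then have "cyc (Suc p) * [:-1,1:] = monom 1 p - 1 + monom 1 p * [:-1,1:]"
    using Suc by (simp only: distrib_right)
  also have "monom 1 p * [:-1,1:] = monom (1::int) (Suc p) - monom 1 p"
  proof -
    have e: "[:-1,1:] = monom (1::int) 1 - 1"
      by (rule poly_eqI) (simp add: coeff_monom coeff_pCons split: nat.split)
    show ?thesis unfolding e by (simp add: right_diff_distrib mult_monom)
  qed
  finally show ?case by simp
qed

lemma degree_cyc: assumes "p \<ge> 1" shows "degree (cyc p) = p - 1"
proof -
  have nz: "cyc p \<noteq> 0"
  proof
    assume "cyc p = 0"
    then have "monom (1::int) p - 1 = 0" using cyc_mult[of p] by simp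
    then have "coeff (monom (1::int) p - 1) p = 0" by simp
    then show False using assms by simp
  qed
  have "degree (cyc p * [:-1,1:]) = degree (cyc p) + 1"
    using nz by (subst degree_mult_eq) auto
  moreover have "degree (monom (1::int) p - 1) = p"
  proof -
    have "degree (monom (1::int) p + (-1)) = p"
      using assms by (subst degree_add_eq_left) (auto simp: degree_monom_eq)
    then show ?thesis by simp
  qed
  ultimately show ?thesis using cyc_mult[of p] by simp
qed

lemma pcompose_power: "pcompose (q ^ n) r = (pcompose q r) ^ n"
  by (induction n) (simp_all add: pcompose_mult pcompose_1)

lemma pcompose_monom1: "pcompose (monom (1::int) n) r = r ^ n"
  by (simp add: monom_altdef pcompose_power pcompose_pCons)

definition F where "F p = pcompose (cyc p) [:1,1:]"

lemma F_shift: "pCons 0 (F p) = [:1,1:]^p - 1"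
proof -
  have c: "pcompose [:-1,1:] [:1::int,1:] = [:0,1:]"
    by (simp add: pcompose_pCons)
  have "pcompose (cyc p * [:-1,1:]) [:1,1:] = F p * [:0,1:]"
    by (simp only: F_def pcompose_mult c)
  moreover have "pcompose (monom (1::int) p - 1) [:1,1:] = [:1,1:]^p - 1"
    by (simp add: pcompose_diff pcompose_monom1 pcompose_1)
  moreover have "F p * [:0,1:] = pCons 0 (F p)"
    by (simp add: mult.commute[of "F p"])
  ultimately show ?thesis using cyc_mult[of p] by simp
qed

lemma coeff_F: "coeff (F p) k = int (p choose (Suc k))"
proof -
  have "coeff (F p) k = coeff (pCons 0 (F p)) (Suc k)" by simp
  also have "\<dots> = coeff ([:1,1:]^p) (Suc k)" by (simp add: F_shift)
  also have "\<dots> = int (p choose (Suc k))"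
  proof (cases "Suc k \<le> p")
    case True then show ?thesis by (simp add: coeff_linear_poly_power)
  next
    case False
    have "degree ([:1::int,1:]^p) \<le> p" by (metis degree_linear_power order.refl)
    then show ?thesis using False by (simp add: coeff_eq_0)
  qed
  finally show ?thesis .
qed



lemma coeff_cyc: "coeff (cyc p) k = (if k < p then 1 else 0)"
  by (simp add: cyc_def coeff_sum coeff_monom)

lemma cyc_irreducible:
  assumes p: "prime p"
  shows "irreducible (cyc p)"
proof (rule irreducibleI)
  have p2: "p \<ge> 2" using p by (simp add: prime_ge_2_nat)
  have dc: "degree (cyc p) = p - 1" using degree_cyc p2 by simp
  have "coeff (cyc p) 0 = 1" using p2 by (simp add: coeff_cyc)
  then show "cyc p \<noteq> 0" by auto
  show "\<not> cyc p dvd 1"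
  proof
    assume "cyc p dvd 1"
    then obtain c where "cyc p = [:c:]" using is_unit_poly_iff by blast
    then have "degree (cyc p) = 0" by simp
    then show False using dc p2 by simp
  qed
  fix A B assume AB: "cyc p = A * B"
  have c0: "coeff A 0 * coeff B 0 = 1" using arg_cong[OF AB, of "\<lambda>q. coeff q 0"] p2
    by (simp add: coeff_cyc coeff_mult)
  show "A dvd 1 \<or> B dvd 1"
  proof (cases "degree A = 0 \<or> degree B = 0")
    case True
    then show ?thesis
    proof
      assume "degree A = 0"
      then have "A = [:coeff A 0:]" by (metis degree_0_id)
      moreover have "coeff A 0 dvd 1" using c0 by (metis dvdI)
      ultimately show ?thesis using is_unit_poly_iff by blast
    next
      assume "degree B = 0"
      then have "B = [:coeff B 0:]" by (metis degree_0_id)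
      moreover have "coeff B 0 dvd 1" using c0 by (metis dvdI mult.commute)
      ultimately show ?thesis using is_unit_poly_iff by blast
    qed
  next
    case False
    define G where "G = pcompose A [:1,1:]"
    define H where "H = pcompose B [:1,1:]"
    have dG: "degree G \<ge> 1" using False by (simp add: G_def degree_pcompose)
    have dH: "degree H \<ge> 1" using False by (simp add: H_def degree_pcompose)
    have GH: "G * H = F p" by (simp add: G_def H_def F_def AB pcompose_mult)
    have dF: "degree (F p) = p - 1" by (simp add: F_def degree_pcompose dc)
    have ip: "prime (int p)" using p by simp
    show ?thesis
    proof (rule FalseE, rule eisenstein[OF ip dG dH])
      show "\<forall>k<degree (G * H). int p dvd coeff (G * H) k"
      proof (intro allI impI)
        fix k assume "k < degree (G*H)"
        then have "Suc k < p" using GH dF by simp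
        then have "p dvd (p choose Suc k)" using p by (intro dvd_choose_prime) auto
        then show "int p dvd coeff (G * H) k" unfolding GH coeff_F by (simp add: int_dvd_int_iff)
      qed
      show "\<not> (int p)^2 dvd coeff (G * H) 0"
      proof
        assume "(int p)^2 dvd coeff (G * H) 0"
        then have "int p * int p dvd int p * 1" unfolding GH coeff_F by (simp add: power2_eq_square)
        then have "int p dvd 1" using p2 by (subst (asm) dvd_mult_cancel_left) auto
        then show False using p2 by simp
      qed
      show "\<not> int p dvd lead_coeff (G * H)"
        using p2 unfolding GH dF coeff_F by simp
    qed
  qed
qed

lemma cyc_prime: "prime p \<Longrightarrow> prime_elem (cyc p)"
  by (intro irreducible_imp_prime_poly cyc_irreducible)



definition ev :: "complex \<Rightarrow> int poly \<Rightarrow> complex" where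
  "ev z Q = poly (map_poly of_int Q) z"

lemma ev_mult: "ev z (P * Q) = ev z P * ev z Q" by (simp add: ev_def mp_mult)
lemma ev_add: "ev z (P + Q) = ev z P + ev z Q" by (simp add: ev_def mp_add)
lemma ev_smult: "ev z (smult c Q) = of_int c * ev z Q" by (simp add: ev_def mp_smult)
lemma ev_const: "ev z [:c:] = of_int c" by (simp add: ev_def map_poly_pCons)

lemma low_deg:
  assumes p: "prime p" and root: "ev z (cyc p) = 0"
  shows "R \<noteq> 0 \<Longrightarrow> ev z R = 0 \<Longrightarrow> degree R \<ge> p - 1"
proof (induction "degree R" arbitrary: R rule: less_induct)
  case less
  have p2: "p \<ge> 2" using p by (simp add: prime_ge_2_nat)
  have dc: "degree (cyc p) = p - 1" using degree_cyc p2 by simp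
  have "coeff (cyc p) 0 = 1" using p2 by (simp add: coeff_cyc)
  then have cnz: "cyc p \<noteq> 0" by auto
  show ?case
  proof (rule ccontr)
    assume lt: "\<not> p - 1 \<le> degree R"
    show False
    proof (cases "degree R = 0")
      case True
      then obtain c where Rc: "R = [:c:]" by (elim degree_eq_zeroE)
      then have "ev z R = of_int c" by (simp add: ev_const)
      moreover have "c \<noteq> 0" using Rc less.prems(1) by auto
      ultimately show False using less.prems(2) by simp
    next
      case False
      obtain q r where qr: "pseudo_divmod (cyc p) R = (q, r)" using prod.exhaust by blast
      define l where "l = lead_coeff R ^ (Suc (degree (cyc p)) - degree R)"
      have eq: "smult l (cyc p) = R * q + r" using pseudo_divmod(1)[OF less.prems(1) qr] by (simp add: l_def)
      have rr: "r = 0 \<or> degree r < degree R" using pseudo_divmod(2)[OF less.prems(1) qr] .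
      have "ev z (smult l (cyc p)) = ev z (R * q + r)" by (simp only: eq)
      then have evr: "ev z r = 0" using root less.prems(2) by (simp add: ev_smult ev_add ev_mult)
      have r0: "r = 0"
      proof (rule ccontr)
        assume "r \<noteq> 0"
        then have "degree r < degree R" using rr by simp
        then have "p - 1 \<le> degree r" using less.hyps[OF _ \<open>r \<noteq> 0\<close> evr] by simp
        then show False using lt \<open>degree r < degree R\<close> by simp
      qed
      have lnz: "l \<noteq> 0" using less.prems(1) by (simp add: l_def)
      have eq2: "cyc p * [:l:] = R * q" using eq r0 by (simp add: mult.commute)
      then have "cyc p dvd R * q" by (intro dvdI) (rule sym)
      then have "cyc p dvd R \<or> cyc p dvd q" using cyc_prime[OF p] prime_elem_dvd_mult_iff by blast
      then show False
      proof
        assume "cyc p dvd R"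
        then have "degree (cyc p) \<le> degree R" using less.prems(1) by (rule dvd_imp_degree_le)
        then show False using lt dc by simp
      next
        assume "cyc p dvd q"
        then obtain T where T: "q = cyc p * T" by (elim dvdE)
        have e3: "cyc p * [:l:] = cyc p * (R * T)" unfolding eq2 T by (rule mult.left_commute)
        have RT: "[:l:] = R * T" using mult_left_cancel[OF cnz] e3 by blast
        then have "T \<noteq> 0" using lnz by auto
        then have "degree (R * T) = degree R + degree T" using less.prems(1) by (simp add: degree_mult_eq)
        moreover have "degree (R * T) = 0" unfolding RT[symmetric] by simp
        ultimately show False using False by simp
      qed
    qed
  qed
qed

lemma cyc_dvd:
  assumes p: "prime p" and root: "ev z (cyc p) = 0" and Q: "ev z Q = 0"
  shows "cyc p dvd Q"
proof -
  have p2: "p \<ge> 2" using p by (simp add: prime_ge_2_nat)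
  have dc: "degree (cyc p) = p - 1" using degree_cyc p2 by simp
  have "coeff (cyc p) 0 = 1" using p2 by (simp add: coeff_cyc)
  then have cnz: "cyc p \<noteq> 0" by auto
  have lc: "lead_coeff (cyc p) = 1" using dc p2 by (simp add: coeff_cyc)
  obtain q r where qr: "pseudo_divmod Q (cyc p) = (q, r)" using prod.exhaust by blast
  have eq: "Q = cyc p * q + r" using pseudo_divmod(1)[OF cnz qr] lc by simp
  have rr: "r = 0 \<or> degree r < p - 1" using pseudo_divmod(2)[OF cnz qr] dc by simp
  have "ev z Q = ev z (cyc p * q + r)" by (simp only: eq[symmetric])
  then have evr: "ev z r = 0" using root Q by (simp add: ev_add ev_mult)
  have "r = 0"
  proof (rule ccontr)
    assume "r \<noteq> 0"
    then have "degree r \<ge> p - 1" using low_deg[OF p root _ evr] by simp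
    then show False using rr \<open>r \<noteq> 0\<close> by simp
  qed
  then show ?thesis using eq by simp
qed



lemma pderiv_sum': "pderiv (sum f A) = (\<Sum>x\<in>A. pderiv (f x))"
  by (induction A rule: infinite_finite_induct) (simp_all add: pderiv_add)

lemma ev_0: "ev z 0 = 0" by (simp add: ev_def)

lemma ev_sum: "ev z (sum f A) = (\<Sum>x\<in>A. ev z (f x))"
  by (induction A rule: infinite_finite_induct) (simp_all add: ev_add ev_0)

lemma ev_monom: "ev z (monom 1 k) = z ^ k"
  by (simp add: ev_def map_poly_monom poly_monom)

lemma sum_int_less: "2 * (\<Sum>k<n. int k) = int n * (int n - 1)"
  by (induction n) (simp_all add: algebra_simps)

lemma D_monom: "poly (pderiv (monom (1::int) k)) 1 = int k"
  by (simp add: pderiv_monom poly_monom)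

lemma key_nat:
  fixes p :: nat and z :: complex and e :: "'i \<Rightarrow> nat" and c :: int
  assumes p: "prime p" "odd p" and root: "ev z (cyc p) = 0" and S: "finite S"
    and sum: "(\<Sum>i\<in>S. z ^ e i) = of_int c"
  shows "int p dvd (\<Sum>i\<in>S. int (e i))"
proof -
  define Q where "Q = (\<Sum>i\<in>S. monom (1::int) (e i)) - [:c:]"
  have "ev z Q = 0"
  proof -
    have "ev z (Q + [:c:]) = (\<Sum>i\<in>S. z ^ e i)" by (simp add: Q_def ev_sum ev_monom)
    then have "ev z Q + of_int c = of_int c" using sum by (simp add: ev_add ev_const)
    then show ?thesis by simp
  qed
  then have "cyc p dvd Q" using cyc_dvd[OF p(1) root] by blast
  then obtain T where T: "Q = cyc p * T" by (elim dvdE)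
  have DQ: "poly (pderiv Q) 1 = (\<Sum>i\<in>S. int (e i))"
    by (simp add: Q_def pderiv_diff pderiv_sum' poly_sum D_monom pderiv_pCons)
  have c1: "poly (cyc p) 1 = int p" by (simp add: cyc_def poly_sum poly_monom)
  have c2: "2 * poly (pderiv (cyc p)) 1 = int p * (int p - 1)"
    by (simp add: cyc_def pderiv_sum' poly_sum D_monom sum_int_less)
  obtain q where q: "p = 2 * q + 1" using p(2) oddE by blast
  have c3: "poly (pderiv (cyc p)) 1 = int p * int q" using c2 q by simp
  have "poly (pderiv Q) 1 = int p * (poly (pderiv T) 1 + int q * poly T 1)"
    unfolding T pderiv_mult by (simp add: c1 c3 algebra_simps)
  then show ?thesis using DQ by (metis dvd_triv_left)
qed



lemma zeta:
  assumes p: "prime p" "odd p"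
  defines "z \<equiv> root_of_unity p"
  shows "z \<noteq> 0" "z ^ p = 1" "ev z (cyc p) = 0" "cnj z = inverse z"
proof -
  have p3: "p \<ge> 3" using p prime_ge_2_nat[OF p(1)] by (cases "p = 2") auto
  show "z \<noteq> 0" by (simp add: z_def root_of_unity_def)
  show zp: "z ^ p = 1" using p3 by (simp add: z_def root_of_unity_def DeMoivre)
  have "Im z = sin (2 * pi / real p)" by (simp add: z_def root_of_unity_def)
  moreover have "sin (2 * pi / real p) > 0"
  proof (rule sin_gt_zero)
    show "0 < 2 * pi / real p" using p3 by simp
    have "2 * pi / real p \<le> 2 * pi / 3" using p3 by (intro divide_left_mono) auto
    also have "\<dots> < pi" by simp
    finally show "2 * pi / real p < pi" .
  qed
  ultimately have "z \<noteq> 1" by auto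
  have "ev z (cyc p) = (\<Sum>k<p. z ^ k)" by (simp add: cyc_def ev_sum ev_monom)
  also have "\<dots> = 0" using \<open>z \<noteq> 1\<close> zp by (simp add: sum_gp_strict)
  finally show "ev z (cyc p) = 0" .
  show "cnj z = inverse z" by (simp add: z_def root_of_unity_def cis_cnj cis_inverse)
qed

lemma key_int:
  fixes r :: "'i \<Rightarrow> int" and c :: int
  assumes p: "prime p" "odd p" and S: "finite S"
    and sum: "(\<Sum>i\<in>S. root_of_unity p powi r i) = of_int c"
  shows "int p dvd (\<Sum>i\<in>S. r i)"
proof -
  define z where "z = root_of_unity p"
  note zf = zeta[OF p, folded z_def]
  have pw: "z powi x = z ^ nat (x mod int p)" for x
  proof -
    have "x = x mod int p + int p * (x div int p)" by simp
    then have "z powi x = z powi (x mod int p) * (z powi int p) powi (x div int p)"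
      using zf(1) by (metis power_int_add power_int_mult)
    also have "\<dots> = z powi (x mod int p)" using zf(2) by simp
    also have "\<dots> = z ^ nat (x mod int p)"
      using p(1) by (metis power_int_of_nat int_nat_eq pos_mod_sign of_nat_0_less_iff prime_gt_0_nat)
    finally show ?thesis .
  qed
  have "(\<Sum>i\<in>S. z powi r i) = of_int c" using sum by (simp add: z_def)
  then have "(\<Sum>i\<in>S. z ^ nat (r i mod int p)) = of_int c" by (simp add: pw)
  from key_nat[OF p zf(3) S this]
  have "int p dvd (\<Sum>i\<in>S. int (nat (r i mod int p)))" .
  also have "(\<Sum>i\<in>S. int (nat (r i mod int p))) = (\<Sum>i\<in>S. r i mod int p)"
    using p(1) by (intro sum.cong) (auto simp: prime_gt_0_nat)
  finally have "(\<Sum>i\<in>S. r i mod int p) mod int p = 0" by simp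
  then show ?thesis by (simp add: mod_sum_eq dvd_eq_mod_eq_0)
qed



definition per :: "int \<Rightarrow> (int \<Rightarrow> 'b) \<Rightarrow> bool" where
  "per N f \<longleftrightarrow> (\<forall>i. f (i + N) = f i)"

lemma per_nat: "per N f \<Longrightarrow> f (i + int k * N) = f i"
proof (induction k)
  case 0 then show ?case by simp
next
  case (Suc k)
  have "f (i + int (Suc k) * N) = f ((i + int k * N) + N)" by (simp add: algebra_simps)
  also have "\<dots> = f (i + int k * N)" using Suc.prems by (simp add: per_def)
  finally show ?case using Suc by simp
qed

lemma per_mult: assumes "per N f" shows "f (i + k * N) = f i"
proof (cases "k \<ge> 0")
  case True then show ?thesis using per_nat[OF assms, of i "nat k"] by simp
next
  case False
  have "f ((i + k * N) + int (nat (-k)) * N) = f (i + k * N)" by (rule per_nat[OF assms])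
  then show ?thesis using False by simp
qed

lemma per_mod: assumes "per N f" shows "f (i mod N) = f i"
proof -
  have "f (i mod N + (i div N) * N) = f (i mod N)" by (rule per_mult[OF assms])
  then show ?thesis by simp
qed

lemma per_cong: assumes "per N f" "i mod N = i' mod N" shows "f i = f i'"
  using per_mod[OF assms(1), of i] per_mod[OF assms(1), of i'] assms(2) by simp

lemma per_sum:
  assumes "per N f" "N > 0"
  shows "(\<Sum>i\<in>{0..<N}. f (i + t)) = (\<Sum>i\<in>{0..<N}. f i)"
proof -
  have "(\<Sum>i\<in>{0..<N}. f (i + t)) = (\<Sum>i\<in>{0..<N}. f ((i + t) mod N))"
    using per_mod[OF assms(1)] by simp
  also have "\<dots> = (\<Sum>i\<in>{0..<N}. f i)"
  proof (rule sum.reindex_bij_betw)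
    show "bij_betw (\<lambda>i. (i + t) mod N) {0..<N} {0..<N}"
    proof (rule bij_betw_byWitness[where f' = "\<lambda>i. (i - t) mod N"])
      show "\<forall>a\<in>{0..<N}. ((a + t) mod N - t) mod N = a"
        by (auto simp: mod_diff_left_eq)
      show "\<forall>a\<in>{0..<N}. ((a - t) mod N + t) mod N = a"
        by (auto simp: mod_add_left_eq)
      show "(\<lambda>i. (i + t) mod N) ` {0..<N} \<subseteq> {0..<N}" using assms(2) by auto
      show "(\<lambda>i. (i - t) mod N) ` {0..<N} \<subseteq> {0..<N}" using assms(2) by auto
    qed
  qed
  finally show ?thesis .
qed

lemma zero_pos:
  fixes N t i :: int
  assumes "0 \<le> i" "i < N"
  shows "(i + t) mod N = 0 \<longleftrightarrow> i = (- t) mod N"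
proof -
  have "(i + t) mod N = 0 \<longleftrightarrow> N dvd i - (-t)" by (simp add: dvd_eq_mod_eq_0)
  also have "\<dots> \<longleftrightarrow> i mod N = (-t) mod N" by (simp add: mod_eq_dvd_iff)
  also have "i mod N = i" using assms by simp
  finally show ?thesis .
qed

lemma one_pos:
  fixes N t i :: int
  assumes "0 \<le> i" "i < N" "N > 1"
  shows "(i + t) mod N = 1 \<longleftrightarrow> i = (1 - t) mod N"
proof -
  have "(i + t) mod N = 1 \<longleftrightarrow> (i + t) mod N = 1 mod N" using assms by simp
  also have "\<dots> \<longleftrightarrow> N dvd (i + t) - 1" by (simp add: mod_eq_dvd_iff)
  also have "\<dots> \<longleftrightarrow> N dvd i - (1 - t)" by (simp add: algebra_simps)
  also have "\<dots> \<longleftrightarrow> i mod N = (1 - t) mod N" by (simp add: mod_eq_dvd_iff)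
  also have "i mod N = i" using assms by simp
  finally show ?thesis .
qed



lemma cnj_powi: "cnj (root_of_unity p powi k) = root_of_unity p powi (- k)"
  by (simp add: root_of_unity_def cis_power_int cis_cnj)

lemma powi_diff_mult: "root_of_unity p powi k * root_of_unity p powi (- l) = root_of_unity p powi (k - l)"
  by (simp add: root_of_unity_def cis_power_int cis_mult diff_divide_distrib algebra_simps)

lemma cond_t:
  fixes N t :: int and a :: "int \<Rightarrow> complex" and e :: "int \<Rightarrow> int"
  assumes p: "prime p" "odd p" and N: "N \<ge> 3"
    and pa: "per N a" and pe: "per N e"
    and zero: "\<And>i. a i = 0 \<longleftrightarrow> i mod N = 0 \<or> i mod N = 1"
    and nz: "\<And>i. a i \<noteq> 0 \<Longrightarrow> a i = root_of_unity p powi e i"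
    and ez: "\<And>i. a i = 0 \<Longrightarrow> e i = 0"
    and ac: "autocorr N a t = of_int c"
  shows "int p dvd e t + e (t + 1) - e (- t) - e (1 - t)"
proof -
  define z where "z = root_of_unity p"
  define I where "I = {0..<N}"
  have fI: "finite I" by (simp add: I_def)
  define D where "D = {i\<in>I. a i \<noteq> 0 \<and> a (i + t) \<noteq> 0}"
  have fD: "finite D" using fI by (simp add: D_def)
  have "autocorr N a t = (\<Sum>i\<in>D. z powi (e i - e (i + t)))"
    unfolding autocorr_def I_def[symmetric]
  proof (rule sym, rule sum.mono_neutral_cong_left[OF fI])
    show "D \<subseteq> I" by (auto simp: D_def)
    show "\<forall>i\<in>I - D. a i * cnj (a (i + t)) = 0" by (auto simp: D_def)
    fix i assume "i \<in> D"
    then have "a i \<noteq> 0" "a (i + t) \<noteq> 0" by (auto simp: D_def)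
    then have "a i * cnj (a (i + t)) = root_of_unity p powi e i * cnj (root_of_unity p powi e (i + t))"
      using nz[of i] nz[of "i + t"] by simp
    also have "\<dots> = z powi (e i - e (i + t))" by (simp only: cnj_powi powi_diff_mult z_def)
    finally show "z powi (e i - e (i + t)) = a i * cnj (a (i + t))" by simp
  qed
  then have "(\<Sum>i\<in>D. root_of_unity p powi (e i - e (i + t))) = of_int c" using ac by (simp add: z_def)
  from key_int[OF p fD this] have dv: "int p dvd (\<Sum>i\<in>D. e i - e (i + t))" .
  define B1 where "B1 = {(- t) mod N, (1 - t) mod N}"
  have B1I: "B1 \<subseteq> I" using N by (auto simp: B1_def I_def)
  have B1z: "i \<in> I \<Longrightarrow> a (i + t) = 0 \<longleftrightarrow> i \<in> B1" for i
    using zero[of "i + t"] zero_pos[of i N t] one_pos[of i N t] N by (auto simp: I_def B1_def)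
  have B1d: "(- t) mod N \<noteq> (1 - t) mod N"
  proof
    assume "(- t) mod N = (1 - t) mod N"
    then have "N dvd (-t) - (1 - t)" by (simp add: mod_eq_dvd_iff)
    then have "N dvd 1" by (simp add: dvd_minus_iff)
    then show False using N by (simp add: zdvd_not_zless)
  qed
  have s1: "(\<Sum>i\<in>D. e i) = (\<Sum>i\<in>I - B1. e i)"
  proof (rule sum.mono_neutral_cong_left)
    show "finite (I - B1)" using fI by simp
    show "D \<subseteq> I - B1" using B1z by (auto simp: D_def)
    show "\<forall>i\<in>I - B1 - D. e i = 0" using B1z ez by (auto simp: D_def)
  qed simp
  have t1: "(\<Sum>i\<in>I. e i) = (\<Sum>i\<in>I - B1. e i) + (\<Sum>i\<in>B1. e i)"
    by (rule sum.subset_diff[OF B1I fI])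
  have t1': "(\<Sum>i\<in>B1. e i) = e (- t) + e (1 - t)"
    using B1d by (simp add: B1_def per_mod[OF pe])
  define B2 where "B2 = {0, 1::int}"
  have B2I: "B2 \<subseteq> I" using N by (auto simp: B2_def I_def)
  have B2z: "i \<in> I \<Longrightarrow> a i = 0 \<longleftrightarrow> i \<in> B2" for i
    using zero[of i] N by (auto simp: I_def B2_def)
  have s2: "(\<Sum>i\<in>D. e (i + t)) = (\<Sum>i\<in>I - B2. e (i + t))"
  proof (rule sum.mono_neutral_cong_left)
    show "finite (I - B2)" using fI by simp
    show "D \<subseteq> I - B2" using B2z by (auto simp: D_def)
    show "\<forall>i\<in>I - B2 - D. e (i + t) = 0" using B2z ez by (auto simp: D_def)
  qed simp
  have t2: "(\<Sum>i\<in>I. e (i + t)) = (\<Sum>i\<in>I - B2. e (i + t)) + (\<Sum>i\<in>B2. e (i + t))"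
    by (rule sum.subset_diff[OF B2I fI])
  have t2': "(\<Sum>i\<in>B2. e (i + t)) = e t + e (t + 1)"
    by (simp add: B2_def add.commute)
  have t3: "(\<Sum>i\<in>I. e (i + t)) = (\<Sum>i\<in>I. e i)"
    unfolding I_def using per_sum[OF pe] N by simp
  have "(\<Sum>i\<in>D. e i - e (i + t)) = (\<Sum>i\<in>D. e i) - (\<Sum>i\<in>D. e (i + t))"
    by (simp add: sum_subtractf)
  also have "\<dots> = e t + e (t + 1) - e (- t) - e (1 - t)"
    using s1 s2 t1 t1' t2 t2' t3 by linarith
  finally show ?thesis using dv by simp
qed



lemma zero_sym:
  fixes N x :: int assumes N: "N \<ge> 3"
    and "x mod N = 0 \<or> x mod N = 1"
  shows "(1 - x) mod N = 0 \<or> (1 - x) mod N = 1"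
proof -
  have "(1 - x) mod N = (1 - x mod N) mod N" by (simp add: mod_diff_right_eq)
  then show ?thesis using assms by auto
qed

lemma sym_norm:
  fixes N :: int and a :: "int \<Rightarrow> complex" and e :: "int \<Rightarrow> int"
  assumes p: "prime p" "odd p" and N: "N \<ge> 3"
    and pa: "per N a" and pe: "per N e"
    and zero: "\<And>i. a i = 0 \<longleftrightarrow> i mod N = 0 \<or> i mod N = 1"
    and nz: "\<And>i. a i \<noteq> 0 \<Longrightarrow> a i = root_of_unity p powi e i"
    and ez: "\<And>i. a i = 0 \<Longrightarrow> e i = 0"
    and ac: "\<And>t. t \<in> {1..N-1} \<Longrightarrow> \<exists>c::int. autocorr N a t = of_int c"
  shows "a x = a (1 - x)"
proof -
  have cond: "int p dvd e t + e (t + 1) - e (- t) - e (1 - t)" if tt: "t \<in> {1..N-1}" for t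
  proof -
    obtain c where "autocorr N a t = of_int c" using ac[OF tt] by blast
    from cond_t[OF p N pa pe zero nz ez this] show ?thesis .
  qed
  have ind: "int k \<le> N - 1 \<longrightarrow> int p dvd e (1 + int k) - e (1 - (1 + int k))" for k
  proof (induction k)
    case 0
    have "a 1 = 0" "a 0 = 0" using zero[of 1] zero[of 0] N by auto
    then show ?case using ez by simp
  next
    case (Suc k)
    show ?case
    proof
      assume "int (Suc k) \<le> N - 1"
      then have t: "1 + int k \<in> {1..N-1}" by simp
      have h1: "int p dvd e (1 + int k) - e (- int k)" using Suc.IH \<open>int (Suc k) \<le> N - 1\<close> by simp
      have h2: "int p dvd e (1 + int k) + e (1 + int k + 1) - e (- (1 + int k)) - e (1 - (1 + int k))"
        using cond[OF t] .
      have "int p dvd (e (1 + int k) + e (1 + int k + 1) - e (- (1 + int k)) - e (1 - (1 + int k)))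
            - (e (1 + int k) - e (- int k))" using h1 h2 by (rule dvd_diff[rotated])
      then show "int p dvd e (1 + int (Suc k)) - e (1 - (1 + int (Suc k)))"
        by (simp add: algebra_simps)
    qed
  qed
  define k where "k = nat ((x - 1) mod N)"
  have kN: "int k \<le> N - 1" using N by (simp add: k_def)
  have kx: "int k = (x - 1) mod N" using N by (simp add: k_def)
  have ex: "e x = e (1 + int k)"
    by (rule per_cong[OF pe]) (simp add: kx mod_add_right_eq)
  have ex': "e (1 - x) = e (1 - (1 + int k))"
  proof (rule per_cong[OF pe])
    have "(1 - (1 + int k)) mod N = (- ((x - 1) mod N)) mod N" by (simp add: kx)
    also have "\<dots> = (- (x - 1)) mod N" by (rule mod_minus_eq)
    finally show "(1 - x) mod N = (1 - (1 + int k)) mod N" by simp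
  qed
  have dvx: "int p dvd e x - e (1 - x)" using ind[of k] kN ex ex' by simp
  show ?thesis
  proof (cases "a x = 0 \<or> a (1 - x) = 0")
    case True
    then have "a x = 0 \<and> a (1 - x) = 0"
    proof
      assume "a x = 0"
      then have "x mod N = 0 \<or> x mod N = 1" using zero[of x] by simp
      then have "(1 - x) mod N = 0 \<or> (1 - x) mod N = 1" by (rule zero_sym[OF N])
      then have "a (1 - x) = 0" using zero[of "1 - x"] by simp
      then show ?thesis using \<open>a x = 0\<close> by simp
    next
      assume "a (1 - x) = 0"
      then have "(1 - x) mod N = 0 \<or> (1 - x) mod N = 1" using zero[of "1 - x"] by simp
      then have "(1 - (1 - x)) mod N = 0 \<or> (1 - (1 - x)) mod N = 1" by (rule zero_sym[OF N])
      then have "a x = 0" using zero[of x] by simp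
      then show ?thesis using \<open>a (1 - x) = 0\<close> by simp
    qed
    then show ?thesis by simp
  next
    case False
    define z where "z = root_of_unity p"
    note zf = zeta[OF p, folded z_def]
    obtain q where q0: "e x - e (1 - x) = int p * q" using dvx by (elim dvdE)
    then have q: "e x = e (1 - x) + int p * q" by linarith
    have h1: "z powi e x = z powi e (1 - x) * z powi (int p * q)"
      unfolding q using zf(1) by (rule power_int_add[OF disjI1])
    have "z powi (int p * q) = (z powi int p) powi q" by (rule power_int_mult)
    then have h2: "z powi (int p * q) = 1" using zf(2) by simp
    have "z powi e x = z powi e (1 - x)" using h1 h2 by simp
    then have "root_of_unity p powi e x = root_of_unity p powi e (1 - x)" by (simp add: z_def)
    moreover have "a x = root_of_unity p powi e x" using False nz[of x] by blast
    moreover have "a (1 - x) = root_of_unity p powi e (1 - x)" using False nz[of "1 - x"] by blast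
    ultimately show ?thesis by simp
  qed
qed



theorem corollary1:
  fixes m n :: nat and g1 g2 :: int and a :: "int \<Rightarrow> complex" and j :: int
  assumes "prime m" and "odd m" and "n \<ge> 1"
    and "almost_mary m (int n + 2) 2 a"
    and "nearly_perfect (int n + 2) a (of_int g1) (of_int g2)"
    and "a j = 0" and "a (j + 1) = 0"
  shows "\<forall>x. a x = a (2 * j + 1 - x)"
proof
  fix x
  define N where "N = int n + 2"
  have N: "N \<ge> 3" using assms(3) by (simp add: N_def)
  have pa: "per N a" using assms(4) by (simp add: almost_mary_def periodic_seq_def per_def N_def)
  have card: "card {i \<in> {0..<N}. a i = 0} = 2" using assms(4) by (simp add: almost_mary_def N_def)
  have ex: "\<And>i. i \<in> {0..<N} \<Longrightarrow> a i \<noteq> 0 \<Longrightarrow> \<exists>b::int. a i = root_of_unity m powi b"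
    using assms(4) by (simp add: almost_mary_def N_def)
  define Z where "Z = {i \<in> {0..<N}. a i = 0}"
  have sub: "{j mod N, (j + 1) mod N} \<subseteq> Z"
    using N assms(6,7) per_mod[OF pa, of j] per_mod[OF pa, of "j + 1"] by (auto simp: Z_def)
  have dist: "j mod N \<noteq> (j + 1) mod N"
  proof
    assume "j mod N = (j + 1) mod N"
    then have "N dvd j - (j + 1)" by (simp add: mod_eq_dvd_iff)
    then have "N dvd 1" by (simp add: dvd_minus_iff)
    then show False using N by (simp add: zdvd_not_zless)
  qed
  have Zeq: "Z = {j mod N, (j + 1) mod N}"
  proof (rule sym, rule card_subset_eq)
    show "finite Z" unfolding Z_def by (rule finite_subset[of _ "{0..<N}"]) auto
    show "{j mod N, (j + 1) mod N} \<subseteq> Z" by (rule sub)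
    show "card {j mod N, (j + 1) mod N} = card Z" using dist card by (simp add: Z_def)
  qed
  have zero_a: "a i = 0 \<longleftrightarrow> i mod N = j mod N \<or> i mod N = (j + 1) mod N" for i
  proof -
    have "a i = 0 \<longleftrightarrow> a (i mod N) = 0" using per_mod[OF pa, of i] by simp
    also have "\<dots> \<longleftrightarrow> i mod N \<in> Z" using N by (simp add: Z_def)
    finally show ?thesis using Zeq by simp
  qed
  define b where "b i = a (i + j)" for i
  have pb: "per N b" unfolding per_def b_def
  proof
    fix i show "a (i + N + j) = a (i + j)" using pa unfolding per_def by (metis add.commute add.left_commute)
  qed
  have zero_b: "b i = 0 \<longleftrightarrow> i mod N = 0 \<or> i mod N = 1" for i
  proof -
    have e1: "(i + j) mod N = j mod N \<longleftrightarrow> i mod N = 0"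
    proof -
      have "(i + j) mod N = j mod N \<longleftrightarrow> N dvd (i + j) - j" by (simp add: mod_eq_dvd_iff)
      also have "\<dots> \<longleftrightarrow> i mod N = 0" by (simp add: dvd_eq_mod_eq_0)
      finally show ?thesis .
    qed
    have e2: "(i + j) mod N = (j + 1) mod N \<longleftrightarrow> i mod N = 1"
    proof -
      have "(i + j) mod N = (j + 1) mod N \<longleftrightarrow> N dvd (i + j) - (j + 1)" by (simp add: mod_eq_dvd_iff)
      also have "\<dots> \<longleftrightarrow> N dvd i - 1" by (simp add: algebra_simps)
      also have "\<dots> \<longleftrightarrow> i mod N = 1 mod N" by (simp add: mod_eq_dvd_iff)
      also have "1 mod N = 1" using N by simp
      finally show ?thesis .
    qed
    show ?thesis unfolding b_def zero_a e1 e2 ..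
  qed
  define E where "E i = (if b i = 0 then 0 else (SOME c::int. b i = root_of_unity m powi c))" for i
  have pE: "per N E" using pb by (simp add: per_def E_def)
  have nzb: "b i = root_of_unity m powi E i" if "b i \<noteq> 0" for i
  proof -
    have "b i = a ((i + j) mod N)" using per_mod[OF pa, of "i + j"] by (simp add: b_def)
    moreover have "(i + j) mod N \<in> {0..<N}" using N by simp
    ultimately have "\<exists>c::int. b i = root_of_unity m powi c" using ex that by metis
    then have "b i = root_of_unity m powi (SOME c::int. b i = root_of_unity m powi c)" by (rule someI_ex)
    then show ?thesis using that by (simp add: E_def)
  qed
  have ezb: "E i = 0" if "b i = 0" for i using that by (simp add: E_def)
  have acb: "\<exists>c::int. autocorr N b t = of_int c" if t: "t \<in> {1..N-1}" for t
  proof -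
    have pf: "per N (\<lambda>i. a i * cnj (a (i + t)))" unfolding per_def
    proof
      fix i
      have "a (i + N + t) = a (i + t)" using pa unfolding per_def by (metis add.commute add.left_commute)
      moreover have "a (i + N) = a i" using pa unfolding per_def by blast
      ultimately show "a (i + N) * cnj (a (i + N + t)) = a i * cnj (a (i + t))" by simp
    qed
    have "autocorr N b t = (\<Sum>i\<in>{0..<N}. a (i + j) * cnj (a (i + j + t)))"
      by (simp add: autocorr_def b_def algebra_simps)
    also have "\<dots> = autocorr N a t"
      unfolding autocorr_def using per_sum[OF pf, of j] N by (simp add: algebra_simps)
    finally have "autocorr N b t = autocorr N a t" .
    moreover have "autocorr N a t = of_int g1 \<or> autocorr N a t = of_int g2"
      using assms(5) t by (simp add: nearly_perfect_def N_def)
    ultimately show ?thesis by (metis)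
  qed
  have "b (x - j) = b (1 - (x - j))"
    by (rule sym_norm[OF assms(1,2) N pb pE zero_b nzb ezb acb])
  then show "a x = a (2 * j + 1 - x)" by (simp add: b_def algebra_simps)
qed

end
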